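(* Let $p$ be a prime and let $a,b$ be integers with $0<a,b<p$. If $\bigl(p-(a^{-1}b)_p\bigr)\bigl(p-(ab^{-1})_p\bigr)=2p+1$, then $S^G_{a,b}$ is generated by 5 invariants, i.e. $|\mathrm{inv}_{a,b}|=5$ (equivalently, $\operatorname{codim}\ker\varphi_{a,b}=3$).
   Context: Let $S=\mathbb{C}[x_1,x_2]$ with its standard grading, $\zeta=e^{2\pi i/p}$ and $G=\mathbb{Z}/p\mathbb{Z}=\langle\zeta\rangle$. For integers $a,b$, $G$ acts on $S$ by the $\mathbb{C}$-algebra automorphisms determined by $x_1\mapsto\zeta^a x_1$, $x_2\mapsto \zeta^b x_2$; $S^G_{a,b}$ denotes the ring of invariants, spanned by the invariant monomials $x_1^cx_2^d$, i.e. those with $ac+bd\equiv 0\pmod p$. $\mathrm{inv}_{a,b}$ denotes the minimal set of monomial generators of $S^G_{a,b}$ as a $\mathbb{C}$-algebra: the nonconstant invariant monomials that are not a product of two nonconstant invariant monomials. Writing $\mathrm{inv}_{a,b}=\{z_0,\dots,z_n\}$ in lexicographic order with $x_1>x_2$, let $R=\mathbb{C}[y_0,\dots,y_n]$ with $\deg y_i=\deg z_i$ and $\varphi_{a,b}:R\to S^G_{a,b}$ the $\mathbb{C}$-algebra map $y_i\mapsto z_i$. For an integer $c$, $c_p$ is the unique integer $0\le c_p<p$ congruent to $c$ mod $p$, and for $c$ not divisible by $p$, $c^{-1}$ is the unique integer $0<c^{-1}<p$ with $cc^{-1}\equiv1\pmod p$. *)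

theory Defs
  imports "HOL-Number_Theory.Number_Theory"
begin

text \<open>Monomials x1^c x2^d of S = C[x1,x2] are represented by exponent pairs (c,d).
  The monomial (c,d) is G-invariant for the action x1 -> zeta^a x1, x2 -> zeta^b x2
  iff a c + b d = 0 mod p.\<close>

definition invariant_mon :: "nat \<Rightarrow> int \<Rightarrow> int \<Rightarrow> nat \<times> nat \<Rightarrow> bool" where
  "invariant_mon p a b m \<longleftrightarrow> [a * int (fst m) + b * int (snd m) = 0] (mod int p)"

definition nonconst_mon :: "nat \<times> nat \<Rightarrow> bool" where
  "nonconst_mon m \<longleftrightarrow> m \<noteq> (0, 0)"

text \<open>Product of monomials = sum of exponent vectors.\<close>
definition inv_gens :: "nat \<Rightarrow> int \<Rightarrow> int \<Rightarrow> (nat \<times> nat) set" where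
  "inv_gens p a b = {m. nonconst_mon m \<and> invariant_mon p a b m \<and>
     \<not> (\<exists>u v. nonconst_mon u \<and> invariant_mon p a b u \<and>
               nonconst_mon v \<and> invariant_mon p a b v \<and>
               m = (fst u + fst v, snd u + snd v))}"

definition inv_mod :: "int \<Rightarrow> int \<Rightarrow> int" where
  "inv_mod p c = (THE i. 0 < i \<and> i < p \<and> [c * i = 1] (mod p))"

end

theory Submission
  imports Defs
begin

lemma box_lemma:
  fixes p n m c d :: int
  assumes nm: "n*m = 2*p+1" and p: "p>0" and c1: "1\<le>c" "c<n" and d1: "1\<le>d" "d<m"
    and cg: "p dvd (n*d - c)"
  shows "2*c = n+1 \<and> 2*d = m+1"
proof -
  obtain k where k: "n*d - c = p*k" using cg by (auto elim!: dvdE)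
  have t1: "n*d - c > 0"
  proof -
    have "n*d \<ge> n*1" using d1 c1 by (intro mult_left_mono) auto
    thus ?thesis using c1 by linarith
  qed
  have t2: "n*d - c < 2*p"
  proof -
    have "n*d \<le> n*(m-1)" using d1 c1 by (intro mult_left_mono) auto
    hence "n*d \<le> 2*p+1 - n" using nm by (simp add: algebra_simps)
    thus ?thesis using c1 by linarith
  qed
  have "k = 1"
  proof -
    have "0 < p*k" using t1 k by simp
    hence "k > 0" using p by (simp add: zero_less_mult_iff)
    moreover have "p*k < p*2" using t2 k by simp
    hence "k < 2" using p by simp
    ultimately show ?thesis by simp
  qed
  hence e1: "n*d - c = p" using k by simp
  have "m*c - d = m*(c - n*d) + 2*p*d"
    using nm by (simp add: algebra_simps)
  hence "p dvd (m*c - d)" using cg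
    by (metis dvd_add dvd_minus_iff dvd_mult dvd_triv_left minus_diff_eq mult.assoc)
  then obtain j where j: "m*c - d = p*j" by (auto elim!: dvdE)
  have s1: "m*c - d > 0"
  proof -
    have "m*c \<ge> m*1" using d1 c1 by (intro mult_left_mono) auto
    thus ?thesis using d1 by linarith
  qed
  have s2: "m*c - d < 2*p"
  proof -
    have "m*c \<le> m*(n-1)" using d1 c1 by (intro mult_left_mono) auto
    hence "m*c \<le> 2*p+1 - m" using nm by (simp add: algebra_simps)
    thus ?thesis using d1 by linarith
  qed
  have "j = 1"
  proof -
    have "0 < p*j" using s1 j by simp
    hence "j > 0" using p by (simp add: zero_less_mult_iff)
    moreover have "p*j < p*2" using s2 j by simp
    hence "j < 2" using p by simp
    ultimately show ?thesis by simp
  qed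
  hence e2: "m*c - d = p" using j by simp
  have "m*(n*d - c) = m*p" using e1 by simp
  hence "(2*p+1)*d - (d+p) = m*p" using nm e2 by (simp add: algebra_simps)
  hence "p*(2*d - 1) = p*m" by (simp add: algebra_simps)
  hence A: "2*d = m+1" using p by simp
  have "n*(m*c - d) = n*p" using e2 by simp
  hence "(2*p+1)*c - (c+p) = n*p" using nm e1 by (simp add: algebra_simps)
  hence "p*(2*c - 1) = p*n" by (simp add: algebra_simps)
  hence B: "2*c = n+1" using p by simp
  show ?thesis using A B by simp
qed


lemma cover_lemma:
  fixes p n m c d :: nat
  assumes pr: "prime p" and nm: "n*m = 2*p+1" and np: "n < p" and mp: "m < p"
    and nz: "(c,d) \<noteq> (0,0)" and cg: "[int c = int n * int d] (mod int p)"
  shows "\<exists>g\<in>{(p,0),(n,1),((n+1) div 2,(m+1) div 2),(1,m),(0,p)}. fst g \<le> c \<and> snd g \<le> d"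
proof -
  have p0: "p > 0" using pr prime_gt_0_nat by blast
  have n1: "n \<ge> 1" using nm by (cases n) auto
  show ?thesis
  proof (cases "d = 0")
    case True
    hence "c > 0" using nz by auto
    have "int p dvd int c" using cg True by (simp add: cong_0_iff)
    hence "p dvd c" by simp
    hence "c \<ge> p" using \<open>c > 0\<close> by (simp add: dvd_imp_le)
    thus ?thesis using True by auto
  next
    case dn: False
    show ?thesis
    proof (cases "c = 0")
      case True
      have "int p dvd int n * int d" using cg True by (simp add: cong_def cong_0_iff[symmetric] cong_sym_eq)
      hence "p dvd n * d" by (metis of_nat_dvd_iff of_nat_mult)
      moreover have "\<not> p dvd n" using np n1 by (auto dest: dvd_imp_le)
      ultimately have "p dvd d" using pr prime_dvd_mult_iff by blast
      hence "d \<ge> p" using dn by (simp add: dvd_imp_le)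
      thus ?thesis using True by auto
    next
      case cn: False
      show ?thesis
      proof (cases "c \<ge> n")
        case True thus ?thesis using dn by auto
      next
        case cl: False
        show ?thesis
        proof (cases "d \<ge> m")
          case True thus ?thesis using cn by auto
        next
          case dl: False
          have "int p dvd (int n * int d - int c)" using cg
            by (simp add: cong_iff_dvd_diff dvd_diff_commute)
          moreover have "int n * int m = 2 * int p + 1" using nm by (metis of_nat_mult of_nat_add of_nat_1 of_nat_numeral)
          ultimately have "2 * int c = int n + 1 \<and> 2 * int d = int m + 1"
            using box_lemma[of "int n" "int m" "int p" "int c" "int d"] p0 cn dn cl dl by simp
          hence "c = (n+1) div 2" "d = (m+1) div 2" by auto
          thus ?thesis by auto
        qed
      qed
    qed
  qed
qed


lemma gens_lemma:
  fixes p n m :: nat and Inv :: "nat \<times> nat \<Rightarrow> bool"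
  assumes pr: "prime p" and nm: "n*m = 2*p+1" and np: "n \<le> p" and mp: "m \<le> p"
    and Inv: "\<And>c d. Inv (c,d) \<longleftrightarrow> [int c = int n * int d] (mod int p)"
  shows "{x. x \<noteq> (0,0) \<and> Inv x \<and> \<not>(\<exists>u v. u \<noteq> (0,0) \<and> Inv u \<and> v \<noteq> (0,0) \<and> Inv v
            \<and> x = (fst u + fst v, snd u + snd v))}
         = {(p,0),(n,1),((n+1) div 2,(m+1) div 2),(1,m),(0,p)}"
    and "card {(p,0),(n,1),((n+1) div 2,(m+1) div 2),(1,m),(0,p)} = (5::nat)"
proof -
  define G where "G = {(p,0),(n,1),((n+1) div 2,(m+1) div 2),(1,m),(0,p)}"
  have p0: "p > 1" using pr prime_gt_1_nat by blast
  have nle: "n \<noteq> p"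
  proof
    assume "n = p"
    hence "p dvd 2*p+1" using nm by (metis dvd_triv_left)
    hence "p dvd 1" by (metis dvd_add_right_iff dvd_triv_right)
    thus False using p0 by simp
  qed
  have mle: "m \<noteq> p"
  proof
    assume "m = p"
    hence "p dvd 2*p+1" using nm by (metis dvd_triv_right)
    hence "p dvd 1" by (metis dvd_add_right_iff dvd_triv_right)
    thus False using p0 by simp
  qed
  have np': "n < p" and mp': "m < p" using np mp nle mle by auto
  have "odd (n*m)" using nm by simp
  hence on: "odd n" and om: "odd m" by auto
  have n3: "n \<ge> 3"
  proof -
    have "n \<noteq> 0" using nm by (cases n) auto
    moreover have "n \<noteq> 1" using nm mp' by auto
    moreover have "n \<noteq> 2" using on by auto
    ultimately show ?thesis by linarith
  qed
  have m3: "m \<ge> 3"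
  proof -
    have "m \<noteq> 0" using nm by (cases m) auto
    moreover have "m \<noteq> 1" using nm np' by auto
    moreover have "m \<noteq> 2" using om by auto
    ultimately show ?thesis by linarith
  qed
  define h where "h = (n+1) div 2"
  define k where "k = (m+1) div 2"
  have h2: "2*h = n+1" using on h_def by presburger
  have k2: "2*k = m+1" using om k_def by presburger
  have hb: "1 < h" "h < n" using h2 n3 by auto
  have kb: "1 < k" "k < m" using k2 m3 by auto
  have G: "G = {(p,0),(n,1),(h,k),(1,m),(0,p)}" unfolding G_def h_def k_def by simp
  have incomp: "g = g'" if "g \<in> G" "g' \<in> G" "fst g' \<le> fst g" "snd g' \<le> snd g" for g g'
    using that hb kb np' mp' unfolding G by auto
  have nzG: "g \<noteq> (0,0)" if "g \<in> G" for g
    using that p0 hb unfolding G by auto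
  have invh: "[int h = int n * int k] (mod int p)"
  proof -
    have "int n * int m = 2 * int p + 1" using nm by (metis of_nat_mult of_nat_add of_nat_1 of_nat_numeral)
    moreover have "2 * int h = int n + 1" "2 * int k = int m + 1" using h2 k2 by linarith+
    ultimately have "2 * (int n * int k - int h) = 2 * int p"
    proof -
      assume a1: "int n * int m = 2 * int p + 1" and a2: "2 * int h = int n + 1" "2 * int k = int m + 1"
      have "2 * (int n * int k - int h) = int n * (2 * int k) - 2 * int h" by (simp add: algebra_simps)
      also have "\<dots> = int n * (int m + 1) - (int n + 1)" using a2 by simp
      also have "\<dots> = int n * int m - 1" by (simp add: algebra_simps)
      finally show ?thesis using a1 by simp
    qed
    hence "int n * int k - int h = int p" by simp
    thus ?thesis unfolding cong_iff_dvd_diff by (metis dvd_diff_commute dvd_refl dvd_triv_left)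
  qed
  have inv1m: "[int 1 = int n * int m] (mod int p)"
  proof -
    have "int n * int m - 1 = int p * 2" using nm by (metis of_nat_mult of_nat_add of_nat_1 of_nat_numeral add_diff_cancel_right' mult.commute)
    thus ?thesis unfolding cong_iff_dvd_diff by (metis dvd_diff_commute dvd_triv_left of_nat_1)
  qed
  have invG: "Inv g" if "g \<in> G" for g
    using that invh inv1m unfolding G by (auto simp: Inv cong_0_iff cong_def)
  have cov: "\<exists>g\<in>G. fst g \<le> fst x \<and> snd g \<le> snd x" if "x \<noteq> (0,0)" "Inv x" for x
    using cover_lemma[OF pr nm np' mp', of "fst x" "snd x"] that Inv[of "fst x" "snd x"]
    unfolding G_def by auto
  have invdiff: "Inv (c - c', d - d')" if "Inv (c,d)" "Inv (c',d')" "c' \<le> c" "d' \<le> d" for c d c' d'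
  proof -
    have "[int c - int c' = int n * int d - int n * int d'] (mod int p)"
      using that Inv by (intro cong_diff) auto
    thus ?thesis using that Inv by (simp add: of_nat_diff algebra_simps)
  qed
  have main: "{x. x \<noteq> (0,0) \<and> Inv x \<and> \<not>(\<exists>u v. u \<noteq> (0,0) \<and> Inv u \<and> v \<noteq> (0,0) \<and> Inv v
            \<and> x = (fst u + fst v, snd u + snd v))} = G"
  apply (rule Set.set_eqI)
  apply (rule iffI)
  proof -
    fix x assume "x \<in> {x. x \<noteq> (0,0) \<and> Inv x \<and> \<not>(\<exists>u v. u \<noteq> (0,0) \<and> Inv u \<and> v \<noteq> (0,0) \<and> Inv v
            \<and> x = (fst u + fst v, snd u + snd v))}"
    hence x: "x \<noteq> (0,0)" "Inv x" and nd: "\<not>(\<exists>u v. u \<noteq> (0,0) \<and> Inv u \<and> v \<noteq> (0,0) \<and> Inv v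
            \<and> x = (fst u + fst v, snd u + snd v))" by auto
    obtain g where g: "g \<in> G" "fst g \<le> fst x" "snd g \<le> snd x" using cov x by blast
    show "x \<in> G"
    proof (rule ccontr)
      assume "x \<notin> G"
      hence "x \<noteq> g" using g by auto
      define v where "v = (fst x - fst g, snd x - snd g)"
      have "v \<noteq> (0,0)" using \<open>x \<noteq> g\<close> g unfolding v_def by (auto simp: prod_eq_iff)
      moreover have "Inv v" unfolding v_def using invdiff[of "fst x" "snd x" "fst g" "snd g"] x g invG by auto
      moreover have "x = (fst g + fst v, snd g + snd v)" using g unfolding v_def by auto
      ultimately show False using nd nzG invG g by blast
    qed
  next
    fix x assume xG: "x \<in> G"
    have "\<not>(\<exists>u v. u \<noteq> (0,0) \<and> Inv u \<and> v \<noteq> (0,0) \<and> Inv v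
            \<and> x = (fst u + fst v, snd u + snd v))"
    proof
      assume "\<exists>u v. u \<noteq> (0,0) \<and> Inv u \<and> v \<noteq> (0,0) \<and> Inv v \<and> x = (fst u + fst v, snd u + snd v)"
      then obtain u v where uv: "u \<noteq> (0,0)" "Inv u" "v \<noteq> (0,0)" "x = (fst u + fst v, snd u + snd v)" by blast
      obtain g where g: "g \<in> G" "fst g \<le> fst u" "snd g \<le> snd u" using cov uv by blast
      have "g = x" using incomp[OF xG g(1)] g uv by auto
      hence "v = (0,0)" using g uv by (auto simp: prod_eq_iff)
      thus False using uv by simp
    qed
    thus "x \<in> {x. x \<noteq> (0,0) \<and> Inv x \<and> \<not>(\<exists>u v. u \<noteq> (0,0) \<and> Inv u \<and> v \<noteq> (0,0) \<and> Inv v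
            \<and> x = (fst u + fst v, snd u + snd v))}" using xG nzG invG by auto
  qed
  thus "{x. x \<noteq> (0,0) \<and> Inv x \<and> \<not>(\<exists>u v. u \<noteq> (0,0) \<and> Inv u \<and> v \<noteq> (0,0) \<and> Inv v
            \<and> x = (fst u + fst v, snd u + snd v))}
         = {(p,0),(n,1),((n+1) div 2,(m+1) div 2),(1,m),(0,p)}" unfolding G_def .
  show "card {(p,0),(n,1),((n+1) div 2,(m+1) div 2),(1,m),(0,p)} = (5::nat)"
    using G hb kb np' mp' unfolding G_def by auto
qed


lemma inv_mod_prop:
  fixes p :: nat and x :: int
  assumes pr: "prime p" and x: "0 < x" "x < int p"
  shows "0 < inv_mod (int p) x \<and> inv_mod (int p) x < int p \<and> [x * inv_mod (int p) x = 1] (mod int p)"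
proof -
  let ?P = "int p"
  have P1: "?P > 1" using pr prime_gt_1_nat by simp
  have prP: "prime ?P" using pr by simp
  have ndx: "\<not> ?P dvd x" using x by (auto dest: zdvd_imp_le)
  have "coprime ?P x" using prP ndx by (simp add: prime_imp_coprime)
  hence "coprime x ?P" by (simp add: coprime_commute)
  then obtain y where y: "[x * y = 1] (mod ?P)" using cong_solve_coprime_int by blast
  define i where "i = y mod ?P"
  have iy: "[x * i = 1] (mod ?P)"
  proof -
    have "[i = y] (mod ?P)" unfolding i_def by (simp add: cong_def)
    hence "[x * i = x * y] (mod ?P)" by (simp add: cong_scalar_left)
    thus ?thesis using y cong_trans by blast
  qed
  have i0: "i \<noteq> 0"
  proof
    assume "i = 0"
    hence "[0 = 1] (mod ?P)" using iy by simp
    hence "?P dvd 1" by (simp add: cong_iff_dvd_diff)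
    thus False using P1 by (simp add: zdvd_not_zless)
  qed
  have "0 \<le> i" "i < ?P" using P1 unfolding i_def by auto
  hence ib: "0 < i" "i < ?P" using i0 by auto
  have uniq: "j = i" if "0 < j" "j < ?P" "[x * j = 1] (mod ?P)" for j
  proof -
    have "[x * j = x * i] (mod ?P)" using that(3) iy by (meson cong_sym cong_trans)
    hence "?P dvd x * (j - i)" by (simp add: cong_iff_dvd_diff algebra_simps)
    hence "?P dvd (j - i)" using prP ndx prime_dvd_mult_iff by blast
    moreover have "\<bar>j - i\<bar> < ?P" using that ib by auto
    ultimately show ?thesis using dvd_imp_le_int[of "j - i" ?P] by (cases "j - i = 0") auto
  qed
  have "inv_mod ?P x = i" unfolding inv_mod_def
  proof (rule the_equality)
    show "0 < i \<and> i < ?P \<and> [x * i = 1] (mod ?P)" using ib iy by blast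
  next
    fix j assume "0 < j \<and> j < ?P \<and> [x * j = 1] (mod ?P)"
    thus "j = i" using uniq by blast
  qed
  thus ?thesis using ib iy by simp
qed


lemma inv_equiv:
  fixes P a b ia c d :: int
  assumes ia: "[a * ia = 1] (mod P)"
  shows "P dvd (a*c + b*d) \<longleftrightarrow> P dvd (c - (P - (ia*b) mod P) * d)"
proof -
  obtain e where e: "a * ia - 1 = P * e" using ia by (auto simp: cong_iff_dvd_diff elim!: dvdE)
  have A: "P dvd (a*c + b*d) \<longleftrightarrow> P dvd (c + ia*b*d)"
  proof
    assume h: "P dvd (a*c + b*d)"
    have e1: "a*ia = 1 + P*e" using e by simp
    have "ia*(a*c + b*d) = (a*ia)*c + ia*b*d" by (simp add: algebra_simps)
    also have "\<dots> = (c + ia*b*d) + P*(e*c)" unfolding e1 by (simp add: algebra_simps)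
    finally have "ia*(a*c + b*d) = (c + ia*b*d) + P*(e*c)" .
    hence "c + ia*b*d = ia*(a*c + b*d) - P*(e*c)" by simp
    thus "P dvd (c + ia*b*d)" using h by simp
  next
    assume h: "P dvd (c + ia*b*d)"
    have "a*(c + ia*b*d) = (a*c + b*d) + P*(e*b*d)"
    proof -
      have "a*(c + ia*b*d) = a*c + (a*ia)*b*d" by (simp add: algebra_simps)
      also have "\<dots> = a*c + (1 + P*e)*b*d" using e by (simp add: algebra_simps eq_diff_eq)
      finally show ?thesis by (simp add: algebra_simps)
    qed
    hence "a*c + b*d = a*(c + ia*b*d) - P*(e*b*d)" by simp
    thus "P dvd (a*c + b*d)" using h by simp
  qed
  define r where "r = (ia*b) div P"
  have rm: "(ia*b) mod P = ia*b - P*r" unfolding r_def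
    using div_mult_mod_eq[of "ia*b" P] by (simp add: algebra_simps)
  define X where "X = c + ia*b*d"
  define Z where "Z = d + r * d"
  have XZ: "c - (P - (ia*b) mod P) * d = X - P*Z" unfolding rm X_def Z_def by (simp add: algebra_simps)
  have B: "P dvd (c - (P - (ia*b) mod P) * d) \<longleftrightarrow> P dvd (c + ia*b*d)"
  proof
    assume "P dvd (c - (P - (ia*b) mod P) * d)"
    hence "P dvd (X - P*Z) + P*Z" unfolding XZ by (intro dvd_add) auto
    thus "P dvd (c + ia*b*d)" unfolding X_def by simp
  next
    assume "P dvd (c + ia*b*d)"
    hence "P dvd X - P*Z" unfolding X_def by (intro dvd_diff) auto
    thus "P dvd (c - (P - (ia*b) mod P) * d)" unfolding XZ .
  qed
  show ?thesis using A B by simp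
qed


theorem proposition1p3:
  fixes p :: nat and a b :: int
  assumes "prime p" and "0 < a" and "a < int p" and "0 < b" and "b < int p"
    and "(int p - (inv_mod (int p) a * b) mod int p) *
         (int p - (a * inv_mod (int p) b) mod int p) = 2 * int p + 1"
  shows "card (inv_gens p a b) = 5"
proof -
  let ?P = "int p"
  define n where "n = ?P - (inv_mod ?P a * b) mod ?P"
  define m where "m = ?P - (a * inv_mod ?P b) mod ?P"
  have P0: "?P > 0" using assms(1) prime_gt_0_nat by simp
  have nb: "1 \<le> n" "n \<le> ?P" unfolding n_def using P0 by (auto simp: int_one_le_iff_zero_less)
  have mb: "1 \<le> m" "m \<le> ?P" unfolding m_def using P0 by (auto simp: int_one_le_iff_zero_less)
  have nm: "n * m = 2 * ?P + 1" using assms(6) unfolding n_def m_def .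
  have ia: "[a * inv_mod ?P a = 1] (mod ?P)" using inv_mod_prop[OF assms(1,2,3)] by blast
  define N where "N = nat n"
  define M where "M = nat m"
  have Nn: "int N = n" and Mm: "int M = m" using nb mb unfolding N_def M_def by auto
  have NM: "N * M = 2*p + 1"
  proof -
    have "int (N*M) = int (2*p+1)" using nm Nn Mm by simp
    thus ?thesis by (simp only: of_nat_eq_iff)
  qed
  have NP: "N \<le> p" "M \<le> p" using nb mb Nn Mm by linarith+
  have Inv: "invariant_mon p a b (c,d) \<longleftrightarrow> [int c = int N * int d] (mod int p)" for c d
  proof -
    have "invariant_mon p a b (c,d) \<longleftrightarrow> ?P dvd (a * int c + b * int d)"
      unfolding invariant_mon_def by (simp add: cong_0_iff)
    also have "\<dots> \<longleftrightarrow> ?P dvd (int c - n * int d)"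
      unfolding n_def by (rule inv_equiv[OF ia])
    also have "\<dots> \<longleftrightarrow> [int c = int N * int d] (mod int p)"
      by (simp add: cong_iff_dvd_diff Nn)
    finally show ?thesis .
  qed
  have eq: "inv_gens p a b = {x. x \<noteq> (0,0) \<and> invariant_mon p a b x \<and> \<not>(\<exists>u v. u \<noteq> (0,0) \<and> invariant_mon p a b u \<and> v \<noteq> (0,0) \<and> invariant_mon p a b v
            \<and> x = (fst u + fst v, snd u + snd v))}"
    unfolding inv_gens_def nonconst_mon_def by blast
  show ?thesis
    unfolding eq gens_lemma(1)[OF assms(1) NM NP Inv] gens_lemma(2)[OF assms(1) NM NP Inv] ..
qed

end
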